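(* Let $X$ be as in the context. (1) If $\limsup_{x\to\infty}H_1(x)<1$, then there exist a positive function $f$ on $\mathbb S$ and $\epsilon>0$ such that $\lim_{x\to\infty}f(x)=\infty$, $\mathcal A f(x)<0$ for all sufficiently large $x\in\mathbb S$, and $$\limsup_{x\to\infty}\mathcal A f(x)\le-\Big(\frac{\epsilon}{2}\Big)^2\liminf_{x\to\infty}\frac{v(x)}{x^2(\log x)^{2-\epsilon/2}}\le 0.$$ (2) If $\liminf_{x\to\infty}H_1(x)>1$, then there exist a positive function $f$ on $\mathbb S$ and $\epsilon>0$ such that $\lim_{x\to\infty}f(x)=0$, $\mathcal A f(x)<0$ for all sufficiently large $x\in\mathbb S$, and $$\limsup_{x\to\infty}\mathcal A f(x)\le-\Big(\frac{\epsilon}{2}\Big)^2\liminf_{x\to\infty}\frac{v(x)}{x^2(\log x)^{2+\epsilon/2}}\le 0.$$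
   Context: Let $\mathbb S\subseteq\mathbb Z_{\ge0}$ be an infinite set and let $X$ be an irreducible continuous-time Markov chain on $\mathbb S$ whose generator acts on functions $f:\mathbb S\to\mathbb R$ by $\mathcal A f(x)=\sum_{\eta\in\mathbb Z}\lambda_\eta(x)\big(f(x+\eta)-f(x)\big)$, where $\lambda_\eta(x)$ is the rate of the jump $x\to x+\eta$ (and $\lambda_\eta(x)=0$ whenever $x+\eta\notin\mathbb S$). Standing assumption: (a) there is a finite set $\Gamma\subset\mathbb Z$ such that $\lambda_\eta\equiv0$ for $\eta\notin\Gamma$; (b) $0\le\lambda_\eta(x)<\infty$ for all $x,\eta$. Define $m(x)=\sum_{\eta}\eta\,\lambda_\eta(x)$, $v(x)=\frac12\sum_\eta\eta^2\lambda_\eta(x)$ (positive on $\mathbb S$ by irreducibility), and for a constant $p$ and $x>1$, $H_p(x)=\dfrac{(\log x)(m(x)x-p\,v(x))}{v(x)}$. All limits are as $x\to\infty$ along $\mathbb S$. *)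

theory Defs
  imports "HOL-Analysis.Analysis"
begin

text \<open>State space: a set S of non-negative integers. Rates: lam eta x is the rate of
the jump x -> x + eta. Gam is the finite set of possible jump sizes.\<close>

definition jump_rel :: "int set \<Rightarrow> (int \<Rightarrow> int \<Rightarrow> real) \<Rightarrow> (int \<times> int) set" where
  "jump_rel S lam = {(x, x + eta) | x eta. x \<in> S \<and> lam eta x > 0}"

definition irreducible_on :: "int set \<Rightarrow> (int \<Rightarrow> int \<Rightarrow> real) \<Rightarrow> bool" where
  "irreducible_on S lam \<longleftrightarrow> (\<forall>x\<in>S. \<forall>y\<in>S. (x, y) \<in> (jump_rel S lam)\<^sup>*)"

definition ctmc_rates :: "int set \<Rightarrow> int set \<Rightarrow> (int \<Rightarrow> int \<Rightarrow> real) \<Rightarrow> bool" where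
  "ctmc_rates S Gam lam \<longleftrightarrow>
     S \<subseteq> {0..} \<and> infinite S \<and> finite Gam \<and>
     (\<forall>eta x. 0 \<le> lam eta x) \<and>
     (\<forall>eta x. eta \<notin> Gam \<longrightarrow> lam eta x = 0) \<and>
     (\<forall>x\<in>S. \<forall>eta. x + eta \<notin> S \<longrightarrow> lam eta x = 0) \<and>
     irreducible_on S lam"

definition gen :: "int set \<Rightarrow> (int \<Rightarrow> int \<Rightarrow> real) \<Rightarrow> (int \<Rightarrow> real) \<Rightarrow> int \<Rightarrow> real" where
  "gen Gam lam f x = (\<Sum>eta\<in>Gam. lam eta x * (f (x + eta) - f x))"

definition drift :: "int set \<Rightarrow> (int \<Rightarrow> int \<Rightarrow> real) \<Rightarrow> int \<Rightarrow> real" where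
  "drift Gam lam x = (\<Sum>eta\<in>Gam. real_of_int eta * lam eta x)"

definition vv :: "int set \<Rightarrow> (int \<Rightarrow> int \<Rightarrow> real) \<Rightarrow> int \<Rightarrow> real" where
  "vv Gam lam x = (1/2) * (\<Sum>eta\<in>Gam. (real_of_int eta)^2 * lam eta x)"

definition HH :: "int set \<Rightarrow> (int \<Rightarrow> int \<Rightarrow> real) \<Rightarrow> real \<Rightarrow> int \<Rightarrow> real" where
  "HH Gam lam p x = ln (real_of_int x) * (drift Gam lam x * real_of_int x - p * vv Gam lam x)
                      / vv Gam lam x"

definition along :: "int set \<Rightarrow> int filter" where
  "along S = inf at_top (principal S)"

end

theory Submission
  imports Defs "HOL-Real_Asymp.Real_Asymp"
begin

definition g1 :: "real \<Rightarrow> real \<Rightarrow> real" where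
  "g1 b t = b * ln t powr (b-1) / t"
definition g2 :: "real \<Rightarrow> real \<Rightarrow> real" where
  "g2 b t = b * ((b-1) * ln t powr (b-2) - ln t powr (b-1)) / t^2"
definition g3 :: "real \<Rightarrow> real \<Rightarrow> real" where
  "g3 b t = b * ((b-1)*(b-2) * ln t powr (b-3) - 3*(b-1) * ln t powr (b-2) + 2 * ln t powr (b-1)) / t^3"

lemma d0: "t > 1 \<Longrightarrow> ((\<lambda>t. ln t powr b) has_real_derivative g1 b t) (at t)"
  unfolding g1_def
  by (rule derivative_eq_intros refl | simp)+

lemma d1: "t > 1 \<Longrightarrow> (g1 b has_real_derivative g2 b t) (at t)"
  unfolding g1_def[abs_def] g2_def
  apply (rule derivative_eq_intros refl | simp)+
  by (simp add: power2_eq_square algebra_simps)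

lemma d2: "t > 1 \<Longrightarrow> (g2 b has_real_derivative g3 b t) (at t)"
  unfolding g2_def[abs_def] g3_def
  apply (rule derivative_eq_intros refl | simp)+
  by (simp add: field_simps eval_nat_numeral)

lemma ln_ge1: "(t::real) \<ge> 3 \<Longrightarrow> ln t \<ge> 1"
proof -
  assume t: "t \<ge> 3"
  have "exp 1 \<le> t" using exp_le t by linarith
  hence "ln (exp 1) \<le> ln t" using t by (subst ln_le_cancel_iff) auto
  thus ?thesis by simp
qed

lemma powr_le1: "(L::real) \<ge> 1 \<Longrightarrow> e \<le> 0 \<Longrightarrow> L powr e \<le> 1"
  using powr_mono[of e 0 L] by simp

lemma g3_bound:
  assumes b: "\<bar>b\<bar> \<le> 1" and t: "t \<ge> 3"
  shows "\<bar>g3 b t\<bar> \<le> 14 * \<bar>b\<bar> / t^3"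
proof -
  define L where "L = ln t"
  have L1: "L \<ge> 1" using ln_ge1[OF t] L_def by simp
  have p1: "0 \<le> L powr (b-1)" "L powr (b-1) \<le> 1" using powr_le1[OF L1, of "b-1"] b by auto
  have p2: "0 \<le> L powr (b-2)" "L powr (b-2) \<le> 1" using powr_le1[OF L1, of "b-2"] b by auto
  have p3: "0 \<le> L powr (b-3)" "L powr (b-3) \<le> 1" using powr_le1[OF L1, of "b-3"] b by auto
  have c1: "\<bar>(b-1)*(b-2)\<bar> \<le> 6"
  proof -
    have "\<bar>b-1\<bar> \<le> 2" "\<bar>b-2\<bar> \<le> 3" using b by auto
    hence "\<bar>b-1\<bar> * \<bar>b-2\<bar> \<le> 2 * 3" by (intro mult_mono) auto
    thus ?thesis by (simp add: abs_mult)
  qed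
  have "\<bar>(b-1)*(b-2) * L powr (b-3) - 3*(b-1) * L powr (b-2) + 2 * L powr (b-1)\<bar>
        \<le> \<bar>(b-1)*(b-2)\<bar> * L powr (b-3) + 3*\<bar>b-1\<bar> * L powr (b-2) + 2 * L powr (b-1)"
  proof -
    have tri: "\<bar>u - v + w\<bar> \<le> \<bar>u\<bar> + \<bar>v\<bar> + \<bar>w\<bar>" for u v w :: real by arith
    show ?thesis using tri[of "(b-1)*(b-2) * L powr (b-3)" "3*(b-1) * L powr (b-2)" "2 * L powr (b-1)"] p1 p2 p3
      by (simp add: abs_mult) (smt (verit))
  qed
  also have "\<dots> \<le> 6 * 1 + 3 * 2 * 1 + 2 * 1"
    apply (intro add_mono mult_mono) using c1 p1 p2 p3 b by auto
  finally have S: "\<bar>(b-1)*(b-2) * L powr (b-3) - 3*(b-1) * L powr (b-2) + 2 * L powr (b-1)\<bar> \<le> 14" by simp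
  have tp: "t^3 > 0" using t by simp
  have "\<bar>g3 b t\<bar> = \<bar>b\<bar> * \<bar>(b-1)*(b-2) * L powr (b-3) - 3*(b-1) * L powr (b-2) + 2 * L powr (b-1)\<bar> / t^3"
    unfolding g3_def L_def using tp by (simp add: abs_mult)
  also have "\<dots> \<le> \<bar>b\<bar> * 14 / t^3"
    using S tp by (intro divide_right_mono mult_left_mono) auto
  finally show ?thesis by (simp add: mult.commute)
qed

lemma taylor_step:
  fixes x e K b :: real
  assumes b: "\<bar>b\<bar> \<le> 1" and K: "K \<ge> 1" and x: "x \<ge> 2*K+3" and e: "\<bar>e\<bar> \<le> K"
  shows "\<bar>ln (x+e) powr b - ln x powr b - g1 b x * e - g2 b x * e^2/2\<bar> \<le> 19*\<bar>b\<bar>*K*e^2/x^3"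
proof (cases "e = 0")
  case True then show ?thesis by simp
next
  case False
  define diff where "diff = (\<lambda>m::nat. if m = 0 then (\<lambda>t. ln t powr b) else if m = 1 then g1 b else if m = 2 then g2 b else g3 b)"
  have D: "\<forall>m t. m < 3 \<and> x - K \<le> t \<and> t \<le> x + K \<longrightarrow> DERIV (diff m) t :> diff (Suc m) t"
  proof (intro allI impI)
    fix m :: nat and t :: real assume a: "m < 3 \<and> x - K \<le> t \<and> t \<le> x + K"
    then have t1: "t > 1" using x K by linarith
    from a have "m = 0 \<or> m = 1 \<or> m = 2" by auto
    then show "DERIV (diff m) t :> diff (Suc m) t"
      using d0[OF t1] d1[OF t1] d2[OF t1] by (auto simp: diff_def)
  qed
  have "\<exists>t. (if x + e < x then x + e < t \<and> t < x else x < t \<and> t < x + e) \<and>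
     diff 0 (x+e) = (\<Sum>m<3. (diff m x / fact m) * (x + e - x)^m) + (diff 3 t / fact 3) * (x + e - x)^3"
    by (rule Taylor[of 3 diff "diff 0" "x - K" "x + K" x "x + e", OF _ refl D]) (use False e K in auto)
  then obtain t where t: "(if x + e < x then x + e < t \<and> t < x else x < t \<and> t < x + e)"
    and eq: "diff 0 (x+e) = (\<Sum>m<3. (diff m x / fact m) * (x + e - x)^m) + (diff 3 t / fact 3) * (x + e - x)^3"
    by blast
  have eq2: "ln (x+e) powr b - ln x powr b - g1 b x * e - g2 b x * e^2/2 = g3 b t * e^3 / 6"
    using eq by (simp add: diff_def eval_nat_numeral fact_numeral field_simps)
  have tK: "t \<ge> x - K" "t \<ge> 3" using t e x K by (auto split: if_splits)
  have tx: "t \<ge> x/2" using tK x K by linarith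
  have xp: "x > 0" using x K by linarith
  have "\<bar>g3 b t * e^3 / 6\<bar> = \<bar>g3 b t\<bar> * \<bar>e\<bar>^3 / 6" by (simp add: abs_mult power_abs)
  also have "\<dots> \<le> (14 * \<bar>b\<bar> / t^3) * (K * e^2) / 6"
  proof (intro divide_right_mono mult_mono)
    show "\<bar>g3 b t\<bar> \<le> 14 * \<bar>b\<bar> / t ^ 3" by (rule g3_bound[OF b tK(2)])
    have "\<bar>e\<bar>^3 = \<bar>e\<bar> * e^2" by (simp add: eval_nat_numeral power2_eq_square abs_mult_self_eq)
    also have "\<dots> \<le> K * e^2" using e by (intro mult_right_mono) auto
    finally show "\<bar>e\<bar>^3 \<le> K * e^2" .
  qed (use tK in auto)
  also have "\<dots> \<le> (14 * \<bar>b\<bar> * 8 / x^3) * (K * e^2) / 6"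
  proof (intro divide_right_mono mult_right_mono)
    have "(x/2)^3 \<le> t^3" using tx xp by (intro power_mono) auto
    hence "x^3 \<le> 8 * t^3" by (simp add: power_divide)
    hence "1 / t^3 \<le> 8 / x^3" using xp tK by (simp add: field_simps)
    thus "14 * \<bar>b\<bar> / t ^ 3 \<le> 14 * \<bar>b\<bar> * 8 / x ^ 3"
      using mult_left_mono[of "1 / t^3" "8/x^3" "14 * \<bar>b\<bar>"] by simp
  qed (use K in auto)
  also have "\<dots> \<le> 19*\<bar>b\<bar>*K*e^2/x^3"
    using xp K by (simp add: field_simps)
  finally show ?thesis using eq2 by simp
qed

definition fb :: "real \<Rightarrow> int \<Rightarrow> real" where
  "fb b x = (if x \<ge> 3 then ln (real_of_int x) powr b else 1)"

definition KK :: "int set \<Rightarrow> real" where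
  "KK Gam = 1 + (\<Sum>eta\<in>Gam. \<bar>real_of_int eta\<bar>)"

lemma KK_ge: "finite Gam \<Longrightarrow> eta \<in> Gam \<Longrightarrow> \<bar>real_of_int eta\<bar> \<le> KK Gam"
  unfolding KK_def using member_le_sum[of eta Gam "\<lambda>e. \<bar>real_of_int e\<bar>"] by auto

lemma KK_1: "KK Gam \<ge> 1"
  unfolding KK_def by (simp add: sum_nonneg)

lemma gen_bound:
  assumes ct: "ctmc_rates S Gam lam" and b: "\<bar>b\<bar> \<le> 1"
    and x: "real_of_int x \<ge> 2 * KK Gam + 3"
  shows "gen Gam lam (fb b) x \<le> g1 b x * drift Gam lam x + g2 b x * vv Gam lam x
           + 38 * \<bar>b\<bar> * KK Gam * vv Gam lam x / (real_of_int x)^3"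
proof -
  let ?K = "KK Gam"
  let ?x = "real_of_int x"
  let ?c = "19 * \<bar>b\<bar> * ?K / ?x^3"
  have fin: "finite Gam" and lnn: "\<And>eta x. 0 \<le> lam eta x" using ct unfolding ctmc_rates_def by auto
  have K1: "?K \<ge> 1" by (rule KK_1)
  have step: "lam eta x * (fb b (x + eta) - fb b x) \<le>
       lam eta x * (g1 b ?x * real_of_int eta + g2 b ?x * (real_of_int eta)^2 / 2 + ?c * (real_of_int eta)^2)"
    if eta: "eta \<in> Gam" for eta
  proof -
    have eK: "\<bar>real_of_int eta\<bar> \<le> ?K" by (rule KK_ge[OF fin eta])
    have x3: "x \<ge> 3" using x K1 by linarith
    have xe3: "x + eta \<ge> 3" using x K1 eK by linarith
    have "fb b (x + eta) - fb b x = ln (?x + real_of_int eta) powr b - ln ?x powr b"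
      using x3 xe3 by (simp add: fb_def)
    also have "\<dots> \<le> g1 b ?x * real_of_int eta + g2 b ?x * (real_of_int eta)^2 / 2 + 19*\<bar>b\<bar>*?K*(real_of_int eta)^2/?x^3"
      using taylor_step[OF b K1 x eK] by linarith
    also have "\<dots> = g1 b ?x * real_of_int eta + g2 b ?x * (real_of_int eta)^2 / 2 + ?c * (real_of_int eta)^2"
      by simp
    finally show ?thesis using lnn[of eta x] by (intro mult_left_mono) auto
  qed
  have "gen Gam lam (fb b) x \<le> (\<Sum>eta\<in>Gam. lam eta x * (g1 b ?x * real_of_int eta + g2 b ?x * (real_of_int eta)^2 / 2 + ?c * (real_of_int eta)^2))"
    unfolding gen_def by (rule sum_mono) (rule step)
  also have "\<dots> = g1 b ?x * (\<Sum>eta\<in>Gam. real_of_int eta * lam eta x) + (g2 b ?x + 2 * ?c) * ((1/2) * (\<Sum>eta\<in>Gam. (real_of_int eta)^2 * lam eta x))"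
    by (simp add: sum.distrib sum_distrib_left sum_divide_distrib algebra_simps)
  also have "\<dots> = g1 b x * drift Gam lam x + g2 b x * vv Gam lam x
           + 38 * \<bar>b\<bar> * KK Gam * vv Gam lam x / (real_of_int x)^3"
    unfolding drift_def vv_def by (simp add: algebra_simps)
  finally show ?thesis .
qed


lemma first_step:
  assumes "(x, y) \<in> R\<^sup>*" "x \<noteq> y" shows "\<exists>z. z \<noteq> x \<and> (x, z) \<in> R"
  using assms
proof (induction rule: converse_rtrancl_induct)
  case base then show ?case by simp
next
  case (step u z)
  show ?case
  proof (cases "z = u")
    case True then show ?thesis using step by simp
  next
    case False then show ?thesis using step by blast
  qed
qed

lemma vpos:
  assumes ct: "ctmc_rates S Gam lam" and x: "x \<in> S"
  shows "vv Gam lam x > 0"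
proof -
  have inf: "infinite S" and fin: "finite Gam" and lnn: "\<And>eta x. 0 \<le> lam eta x"
    and zero: "\<And>eta x. eta \<notin> Gam \<Longrightarrow> lam eta x = 0"
    and irr: "irreducible_on S lam" using ct unfolding ctmc_rates_def by auto
  obtain y where y: "y \<in> S" "y \<noteq> x" using inf x
    by (metis finite_insert finite_subset infinite_imp_nonempty insert_Diff subset_insert Diff_iff singletonI subsetI)
  have "(x, y) \<in> (jump_rel S lam)\<^sup>*" using irr x y unfolding irreducible_on_def by auto
  then obtain z where "z \<noteq> x" "(x, z) \<in> jump_rel S lam" using first_step y(2) by metis
  then obtain eta where eta: "eta \<noteq> 0" "lam eta x > 0" unfolding jump_rel_def by auto
  have eG: "eta \<in> Gam" using eta zero by force
  have "0 < (real_of_int eta)^2 * lam eta x" using eta by simp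
  also have "\<dots> \<le> (\<Sum>e\<in>Gam. (real_of_int e)^2 * lam e x)"
    by (rule member_le_sum[OF eG]) (use lnn fin in auto)
  finally show ?thesis unfolding vv_def by simp
qed

lemma core:
  assumes ct: "ctmc_rates S Gam lam" and a: "0 < a" "a \<le> 1" and ab: "\<bar>b\<bar> = a"
    and xS: "x \<in> S" and x: "real_of_int x \<ge> 2 * KK Gam + 3"
    and sm: "38 * KK Gam * (ln (real_of_int x))^3 \<le> a * real_of_int x"
    and H: "b * (HH Gam lam 1 x + b - 1) \<le> - 3 * a^2"
  shows "gen Gam lam (fb b) x \<le> - 2 * a^2 * (vv Gam lam x / ((real_of_int x)^2 * ln (real_of_int x) powr (2 - b)))"
proof -
  let ?x = "real_of_int x"
  let ?K = "KK Gam"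
  define L where "L = ln ?x"
  define P where "P = L powr (2 - b)"
  define m where "m = drift Gam lam x"
  define v where "v = vv Gam lam x"
  define H where "H = HH Gam lam 1 x"
  have K1: "?K \<ge> 1" by (rule KK_1)
  have xp: "?x \<ge> 3" using x K1 by linarith
  have L1: "L \<ge> 1" unfolding L_def by (rule ln_ge1[OF xp])
  have Pp: "P > 0" unfolding P_def using L1 by simp
  have vp: "v > 0" unfolding v_def by (rule vpos[OF ct xS])
  have b1: "\<bar>b\<bar> \<le> 1" using ab a by simp
  have P1: "L powr (b - 1) = L / P" unfolding P_def using L1
    by (simp add: powr_diff powr_add[symmetric] field_simps power2_eq_square)
  have P2: "L powr (b - 2) = 1 / P" unfolding P_def using L1
    by (simp add: powr_minus_divide[symmetric] powr_minus[symmetric])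
  have Hv: "H = L * (m * ?x - v) / v" unfolding H_def HH_def
    by (simp add: L_def m_def v_def)
  have "g1 b ?x * m + g2 b ?x * v = b * (H + b - 1) * v / (?x^2 * P)"
    unfolding g1_def g2_def L_def[symmetric] P1 P2 Hv using Pp xp vp
    by (simp add: field_simps power2_eq_square)
  also have "\<dots> \<le> - 3 * a^2 * v / (?x^2 * P)"
  proof -
    have "b * (H + b - 1) * v \<le> (- 3 * a^2) * v"
      by (rule mult_right_mono) (use H vp in \<open>auto simp: H_def\<close>)
    thus ?thesis using Pp xp by (intro divide_right_mono) auto
  qed
  finally have main: "g1 b ?x * m + g2 b ?x * v \<le> - 3 * a^2 * v / (?x^2 * P)" .
  have PL: "P \<le> L^3"
  proof -
    have "P \<le> L powr 3" unfolding P_def using L1 b1 by (intro powr_mono) auto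
    also have "L powr 3 = L^3" using L1 by (simp add: powr_realpow)
    finally show ?thesis .
  qed
  have err: "38 * \<bar>b\<bar> * ?K * v / ?x^3 \<le> a^2 * v / (?x^2 * P)"
  proof -
    have A0: "38 * ?K * P \<le> 38 * ?K * L^3" using mult_left_mono[OF PL, of "38*?K"] K1 by simp
    have A1: "38 * ?K * P \<le> a * ?x" using A0 sm unfolding L_def by linarith
    have "38 * \<bar>b\<bar> * ?K * v / ?x^3 = (a * v / (?x^3 * P)) * (38 * ?K * P)"
      using ab Pp xp by (simp add: field_simps)
    also have "\<dots> \<le> (a * v / (?x^3 * P)) * (a * ?x)"
      by (rule mult_left_mono[OF A1]) (use a vp Pp xp in simp)
    also have "\<dots> = a^2 * v / (?x^2 * P)"
      using xp Pp by (simp add: field_simps power2_eq_square power3_eq_cube)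
    finally show ?thesis .
  qed
  have "gen Gam lam (fb b) x \<le> g1 b ?x * m + g2 b ?x * v + 38 * \<bar>b\<bar> * ?K * v / ?x^3"
    using gen_bound[OF ct b1 x] unfolding m_def v_def .
  also have "\<dots> \<le> - 3 * a^2 * v / (?x^2 * P) + a^2 * v / (?x^2 * P)"
    using main err by linarith
  also have "\<dots> = - 2 * a^2 * (v / (?x^2 * P))" by (simp add: field_simps)
  finally show ?thesis unfolding v_def P_def L_def .
qed


lemma along_ev: "eventually P (along S) \<longleftrightarrow> (\<exists>N. \<forall>x\<in>S. x \<ge> N \<longrightarrow> P x)"
  unfolding along_def eventually_inf_principal eventually_at_top_linorder by auto

lemma along_nonbot:
  assumes ct: "ctmc_rates S Gam lam" shows "along S \<noteq> bot"
proof
  assume "along S = bot"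
  then have "eventually (\<lambda>x. False) (along S)" by simp
  then obtain N where N: "\<forall>x\<in>S. x \<ge> N \<longrightarrow> False" unfolding along_ev by auto
  have "S \<subseteq> {0..N}" using ct N unfolding ctmc_rates_def by force
  hence "finite S" using finite_subset by blast
  thus False using ct unfolding ctmc_rates_def by auto
qed

lemma along_le: "along S \<le> at_top"
  unfolding along_def by simp

lemma ev_large: "eventually (\<lambda>x::int. real_of_int x \<ge> c) (along S)"
  using filter_leD[OF along_le] filterlim_real_of_int_at_top
  by (metis (mono_tags) filterlim_at_top)

lemma ev_small:
  assumes a: "a > 0" and K: "K \<ge> 1"
  shows "eventually (\<lambda>x::int. 38 * K * (ln (real_of_int x))^3 \<le> a * real_of_int x) (along S)"
proof -
  have t: "((\<lambda>y::real. ln y ^ 3 / y) \<longlongrightarrow> 0) at_top" by real_asymp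
  have t2: "((\<lambda>x::int. ln (real_of_int x) ^ 3 / real_of_int x) \<longlongrightarrow> 0) at_top"
    using filterlim_compose[OF t filterlim_real_of_int_at_top] by (simp add: o_def)
  have "eventually (\<lambda>x::int. ln (real_of_int x) ^ 3 / real_of_int x < a / (38 * K)) at_top"
    using order_tendstoD(2)[OF t2] a K by simp
  hence e1: "eventually (\<lambda>x::int. ln (real_of_int x) ^ 3 / real_of_int x < a / (38 * K)) (along S)"
    using filter_leD[OF along_le] by blast
  show ?thesis using e1 ev_large[of 1 S]
  proof (eventually_elim)
    case (elim x)
    then have xp: "real_of_int x > 0" by linarith
    from elim(1) have "ln (real_of_int x) ^ 3 < a / (38 * K) * real_of_int x"
      using xp by (simp add: field_simps)
    hence "38 * K * ln (real_of_int x) ^ 3 \<le> 38 * K * (a / (38 * K) * real_of_int x)"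
      using K by (intro mult_left_mono) auto
    thus ?case using K by simp
  qed
qed

lemma fb_pos: "fb b x > 0"
proof (cases "x \<ge> 3")
  case True
  then have "ln (real_of_int x) > 0" by simp
  then show ?thesis using True by (simp add: fb_def)
qed (simp add: fb_def)

lemma fb_ev: "eventually (\<lambda>x. fb b x = ln (real_of_int x) powr b) (along S)"
  using ev_large[of 3 S] by eventually_elim (simp add: fb_def)

lemma concl:
  fixes W :: "int \<Rightarrow> real"
  assumes nb: "F \<noteq> bot" and a: "a > 0"
    and ev: "eventually (\<lambda>x. g x \<le> - 2 * a^2 * W x \<and> W x > 0) F"
  shows "eventually (\<lambda>x. g x < 0) F \<and>
         Limsup F (\<lambda>x. ereal (g x)) \<le> - ereal (a^2) * Liminf F (\<lambda>x. ereal (W x)) \<and>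
         - ereal (a^2) * Liminf F (\<lambda>x. ereal (W x)) \<le> 0"
proof (intro conjI)
  show "eventually (\<lambda>x. g x < 0) F" using ev
  proof eventually_elim
    case (elim x)
    have "0 < 2 * a^2 * W x" using elim a by simp
    thus ?case using elim by linarith
  qed
  have "Limsup F (\<lambda>x. ereal (g x)) \<le> Limsup F (\<lambda>x. - (ereal (a^2) * ereal (W x)))"
  proof (rule Limsup_mono)
    show "eventually (\<lambda>x. ereal (g x) \<le> - (ereal (a^2) * ereal (W x))) F" using ev
    proof eventually_elim
      case (elim x)
      have "0 \<le> a^2 * W x" using elim by simp
      hence "g x \<le> - (a^2 * W x)" using elim by linarith
      thus ?case by simp
    qed
  qed
  also have "\<dots> = - Liminf F (\<lambda>x. ereal (a^2) * ereal (W x))" by (rule ereal_Limsup_uminus)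
  also have "\<dots> = - (ereal (a^2) * Liminf F (\<lambda>x. ereal (W x)))"
    by (subst Liminf_ereal_mult_left[OF nb]) auto
  also have "\<dots> = - ereal (a^2) * Liminf F (\<lambda>x. ereal (W x))" by (rule ereal_mult_minus_left[symmetric])
  finally show "Limsup F (\<lambda>x. ereal (g x)) \<le> - ereal (a^2) * Liminf F (\<lambda>x. ereal (W x))" .
  have L0: "0 \<le> Liminf F (\<lambda>x. ereal (W x))"
    by (rule Liminf_bounded) (use ev in \<open>eventually_elim, simp\<close>)
  have "0 \<le> ereal (a^2) * Liminf F (\<lambda>x. ereal (W x))" using L0 by simp
  thus "- ereal (a^2) * Liminf F (\<lambda>x. ereal (W x)) \<le> 0" by (simp only: ereal_mult_minus_left) simp
qed

theorem mainTheorem2: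
  fixes S Gam :: "int set" and lam :: "int \<Rightarrow> int \<Rightarrow> real"
  assumes "ctmc_rates S Gam lam"
  shows
   "(Limsup (along S) (\<lambda>x. ereal (HH Gam lam 1 x)) < 1 \<longrightarrow>
      (\<exists>f :: int \<Rightarrow> real. \<exists>\<epsilon> :: real. \<epsilon> > 0 \<and> (\<forall>x\<in>S. f x > 0) \<and>
         filterlim f at_top (along S) \<and>
         eventually (\<lambda>x. gen Gam lam f x < 0) (along S) \<and>
         Limsup (along S) (\<lambda>x. ereal (gen Gam lam f x))
           \<le> - ereal ((\<epsilon>/2)^2) * Liminf (along S)
                (\<lambda>x. ereal (vv Gam lam x / ((real_of_int x)^2 * ln (real_of_int x) powr (2 - \<epsilon>/2)))) \<and>
         - ereal ((\<epsilon>/2)^2) * Liminf (along S)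
                (\<lambda>x. ereal (vv Gam lam x / ((real_of_int x)^2 * ln (real_of_int x) powr (2 - \<epsilon>/2)))) \<le> 0))
    \<and>
    (Liminf (along S) (\<lambda>x. ereal (HH Gam lam 1 x)) > 1 \<longrightarrow>
      (\<exists>f :: int \<Rightarrow> real. \<exists>\<epsilon> :: real. \<epsilon> > 0 \<and> (\<forall>x\<in>S. f x > 0) \<and>
         (f \<longlongrightarrow> 0) (along S) \<and>
         eventually (\<lambda>x. gen Gam lam f x < 0) (along S) \<and>
         Limsup (along S) (\<lambda>x. ereal (gen Gam lam f x))
           \<le> - ereal ((\<epsilon>/2)^2) * Liminf (along S)
                (\<lambda>x. ereal (vv Gam lam x / ((real_of_int x)^2 * ln (real_of_int x) powr (2 + \<epsilon>/2)))) \<and>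
         - ereal ((\<epsilon>/2)^2) * Liminf (along S)
                (\<lambda>x. ereal (vv Gam lam x / ((real_of_int x)^2 * ln (real_of_int x) powr (2 + \<epsilon>/2)))) \<le> 0))"
proof (intro conjI impI)
  note ct = assms
  have nb: "along S \<noteq> bot" by (rule along_nonbot[OF ct])
  let ?K = "KK Gam"
  have K1: "?K \<ge> 1" by (rule KK_1)
  have Wpos: "eventually (\<lambda>x. x \<in> S) (along S)"
    unfolding along_def by (simp add: eventually_inf_principal)
  {
    assume "Limsup (along S) (\<lambda>x. ereal (HH Gam lam 1 x)) < 1"
    then obtain z where z: "Limsup (along S) (\<lambda>x. ereal (HH Gam lam 1 x)) < ereal z" "ereal z < 1"
      using ereal_dense2 by blast
    have z1: "z < 1" using z(2) by simp
    have evH: "eventually (\<lambda>x. HH Gam lam 1 x < z) (along S)"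
      using Limsup_lessD[OF z(1)] by simp
    define a where "a = min 1 (1 - z) / 4"
    have a0: "a > 0" and a1: "a \<le> 1" and az: "z \<le> 1 - 4 * a" using z1 unfolding a_def by auto
    have ev: "eventually (\<lambda>x. gen Gam lam (fb a) x \<le> - 2 * a^2 *
        (vv Gam lam x / ((real_of_int x)^2 * ln (real_of_int x) powr (2 - (2*a)/2))) \<and>
        vv Gam lam x / ((real_of_int x)^2 * ln (real_of_int x) powr (2 - (2*a)/2)) > 0) (along S)"
      using evH Wpos ev_large[of "2 * ?K + 3" S] ev_small[OF a0 K1, of S]
    proof eventually_elim
      case (elim x)
      have Hb: "a * (HH Gam lam 1 x + a - 1) \<le> - 3 * a^2"
      proof -
        have "HH Gam lam 1 x + a - 1 \<le> - 3 * a" using elim(1) az by linarith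
        hence "a * (HH Gam lam 1 x + a - 1) \<le> a * (- 3 * a)" using a0 by (intro mult_left_mono) auto
        thus ?thesis by (simp add: power2_eq_square)
      qed
      have g: "gen Gam lam (fb a) x \<le> - 2 * a^2 * (vv Gam lam x / ((real_of_int x)^2 * ln (real_of_int x) powr (2 - a)))"
        by (rule core[OF ct a0 a1 _ elim(2) elim(3) elim(4) Hb]) (use a0 in simp)
      have x3: "real_of_int x \<ge> 3" using elim(3) K1 by linarith
      have "ln (real_of_int x) > 0" using x3 by simp
      hence "vv Gam lam x / ((real_of_int x)^2 * ln (real_of_int x) powr (2 - a)) > 0"
        using vpos[OF ct elim(2)] x3 by simp
      then show ?case using g by simp
    qed
    have lim: "filterlim (fb a) at_top (along S)"
    proof -
      have t: "filterlim (\<lambda>y. ln y powr a) at_top at_top" using a0 by real_asymp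
      have "filterlim (\<lambda>x::int. ln (real_of_int x) powr a) at_top at_top"
        using filterlim_compose[OF t filterlim_real_of_int_at_top] by (simp add: o_def)
      hence "filterlim (\<lambda>x::int. ln (real_of_int x) powr a) at_top (along S)"
        using filterlim_mono[OF _ order_refl along_le] by blast
      thus ?thesis using filterlim_cong[OF refl refl fb_ev[of a S]] by simp
    qed
    show "\<exists>f :: int \<Rightarrow> real. \<exists>\<epsilon> :: real. \<epsilon> > 0 \<and> (\<forall>x\<in>S. f x > 0) \<and>
         filterlim f at_top (along S) \<and>
         eventually (\<lambda>x. gen Gam lam f x < 0) (along S) \<and>
         Limsup (along S) (\<lambda>x. ereal (gen Gam lam f x))
           \<le> - ereal ((\<epsilon>/2)^2) * Liminf (along S)
                (\<lambda>x. ereal (vv Gam lam x / ((real_of_int x)^2 * ln (real_of_int x) powr (2 - \<epsilon>/2)))) \<and>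
         - ereal ((\<epsilon>/2)^2) * Liminf (along S)
                (\<lambda>x. ereal (vv Gam lam x / ((real_of_int x)^2 * ln (real_of_int x) powr (2 - \<epsilon>/2)))) \<le> 0"
      using concl[OF nb a0 ev] a0 lim fb_pos[of a] by (intro exI[of _ "fb a"] exI[of _ "2*a"]) simp
  }
  {
    assume "Liminf (along S) (\<lambda>x. ereal (HH Gam lam 1 x)) > 1"
    then obtain z where z: "1 < ereal z" "ereal z < Liminf (along S) (\<lambda>x. ereal (HH Gam lam 1 x))"
      using ereal_dense2 by blast
    have z1: "z > 1" using z(1) by simp
    have evH: "eventually (\<lambda>x. HH Gam lam 1 x > z) (along S)"
      using less_LiminfD[OF z(2)] by simp
    define a where "a = min 1 (z - 1) / 4"
    have a0: "a > 0" and a1: "a \<le> 1" and az: "z \<ge> 1 + 4 * a" using z1 unfolding a_def by auto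
    have ev: "eventually (\<lambda>x. gen Gam lam (fb (-a)) x \<le> - 2 * a^2 *
        (vv Gam lam x / ((real_of_int x)^2 * ln (real_of_int x) powr (2 + (2*a)/2))) \<and>
        vv Gam lam x / ((real_of_int x)^2 * ln (real_of_int x) powr (2 + (2*a)/2)) > 0) (along S)"
      using evH Wpos ev_large[of "2 * ?K + 3" S] ev_small[OF a0 K1, of S]
    proof eventually_elim
      case (elim x)
      have Hb: "(-a) * (HH Gam lam 1 x + (-a) - 1) \<le> - 3 * a^2"
      proof -
        have "HH Gam lam 1 x - a - 1 \<ge> 3 * a" using elim(1) az by linarith
        hence "a * (HH Gam lam 1 x - a - 1) \<ge> a * (3 * a)" using a0 by (intro mult_left_mono) auto
        thus ?thesis by (simp add: power2_eq_square algebra_simps)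
      qed
      have g: "gen Gam lam (fb (-a)) x \<le> - 2 * a^2 * (vv Gam lam x / ((real_of_int x)^2 * ln (real_of_int x) powr (2 - (-a))))"
        by (rule core[OF ct a0 a1 _ elim(2) elim(3) elim(4) Hb]) (use a0 in simp)
      have x3: "real_of_int x \<ge> 3" using elim(3) K1 by linarith
      have "ln (real_of_int x) > 0" using x3 by simp
      hence "vv Gam lam x / ((real_of_int x)^2 * ln (real_of_int x) powr (2 + a)) > 0"
        using vpos[OF ct elim(2)] x3 by simp
      then show ?case using g by simp
    qed
    have lim: "(fb (-a) \<longlongrightarrow> 0) (along S)"
    proof -
      have t: "((\<lambda>y. ln y powr (-a)) \<longlongrightarrow> 0) at_top" using a0 by real_asymp
      have "((\<lambda>x::int. ln (real_of_int x) powr (-a)) \<longlongrightarrow> 0) at_top"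
        using filterlim_compose[OF t filterlim_real_of_int_at_top] by (simp add: o_def)
      hence "((\<lambda>x::int. ln (real_of_int x) powr (-a)) \<longlongrightarrow> 0) (along S)"
        using tendsto_mono[OF along_le] by blast
      thus ?thesis using filterlim_cong[OF refl refl fb_ev[of "-a" S]] by simp
    qed
    show "\<exists>f :: int \<Rightarrow> real. \<exists>\<epsilon> :: real. \<epsilon> > 0 \<and> (\<forall>x\<in>S. f x > 0) \<and>
         (f \<longlongrightarrow> 0) (along S) \<and>
         eventually (\<lambda>x. gen Gam lam f x < 0) (along S) \<and>
         Limsup (along S) (\<lambda>x. ereal (gen Gam lam f x))
           \<le> - ereal ((\<epsilon>/2)^2) * Liminf (along S)
                (\<lambda>x. ereal (vv Gam lam x / ((real_of_int x)^2 * ln (real_of_int x) powr (2 + \<epsilon>/2)))) \<and>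
         - ereal ((\<epsilon>/2)^2) * Liminf (along S)
                (\<lambda>x. ereal (vv Gam lam x / ((real_of_int x)^2 * ln (real_of_int x) powr (2 + \<epsilon>/2)))) \<le> 0"
      using concl[OF nb a0 ev] a0 lim fb_pos[of "-a"] by (intro exI[of _ "fb (-a)"] exI[of _ "2*a"]) simp
  }
qed

end
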